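(* Let $P$ be a finite poset and fix $\alpha^{B},\omega^{B}>0$. For every $\pi\in\mathbb R_{>0}^P$ and every $p\in P$, \[ \lim_{n\to\infty}\Big(\prod_{i=0}^{n-1}T_p^{B}\big((\rho^{B})^i(\pi)\big)\Big)^{1/n}=1, \] i.e. $T_p^{B}$ is multiplicatively $1$-mesic under birational rowmotion.
   Context: Let $\widehat P$ be $P$ with a new minimum $\widehat0$ and maximum $\widehat1$ adjoined; any $\pi\in\mathbb R_{>0}^P$ is extended by $\pi(\widehat0)=\alpha^{B}$, $\pi(\widehat1)=\omega^{B}$. For $p\in P$ the birational toggle $\tau_p^{B}$ changes only the value at $p$, replacing it by $\big(\sum_{r\in\widehat P,\,r\lessdot p}\pi(r)\big)\big/\big(\pi(p)\sum_{r\in\widehat P,\,p\lessdot r}\pi(r)^{-1}\big)$. Birational rowmotion is $\rho^{B}=\tau^{B}_{p_1}\circ\cdots\circ\tau^{B}_{p_m}$ for any linear extension $p_1,\dots,p_m$ of $P$ (independent of the choice). Define $T_p^{+,B}(\pi)=\pi(p)/\sum_{r\lessdot p}\pi(r)$, $T_p^{-,B}(\pi)=1/\big(\pi(p)\sum_{p\lessdot r}\pi(r)^{-1}\big)$ (covers taken in $\widehat P$), and $T_p^{B}=T_p^{+,B}/T_p^{-,B}$. *)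

theory Defs
  imports Complex_Main
begin

text \<open>The finite poset P is a type of class finite + order.
  The bounded poset P-hat adjoins a new minimum Bot and a new maximum Top.\<close>

datatype 'a hat = Bot | Elt 'a | Top

fun hle :: "'a::order hat \<Rightarrow> 'a hat \<Rightarrow> bool" where
  "hle Bot _ = True"
| "hle (Elt x) (Elt y) = (x \<le> y)"
| "hle (Elt x) Top = True"
| "hle Top Top = True"
| "hle _ _ = False"

definition hless :: "'a::order hat \<Rightarrow> 'a hat \<Rightarrow> bool" where
  "hless x y \<longleftrightarrow> hle x y \<and> x \<noteq> y"

definition hcov :: "'a::order hat \<Rightarrow> 'a hat \<Rightarrow> bool" where
  "hcov x y \<longleftrightarrow> hless x y \<and> \<not> (\<exists>z. hless x z \<and> hless z y)"

definition hat_univ :: "'a hat set" where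
  "hat_univ = {Bot, Top} \<union> Elt ` UNIV"

fun ext_lab :: "real \<Rightarrow> real \<Rightarrow> ('a \<Rightarrow> real) \<Rightarrow> 'a hat \<Rightarrow> real" where
  "ext_lab \<alpha> \<omega> \<pi> Bot = \<alpha>"
| "ext_lab \<alpha> \<omega> \<pi> (Elt x) = \<pi> x"
| "ext_lab \<alpha> \<omega> \<pi> Top = \<omega>"

definition lower_sum :: "real \<Rightarrow> real \<Rightarrow> ('a::order \<Rightarrow> real) \<Rightarrow> 'a \<Rightarrow> real" where
  "lower_sum \<alpha> \<omega> \<pi> p = (\<Sum>r\<in>{r\<in>hat_univ. hcov r (Elt p)}. ext_lab \<alpha> \<omega> \<pi> r)"

definition upper_inv_sum :: "real \<Rightarrow> real \<Rightarrow> ('a::order \<Rightarrow> real) \<Rightarrow> 'a \<Rightarrow> real" where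
  "upper_inv_sum \<alpha> \<omega> \<pi> p = (\<Sum>r\<in>{r\<in>hat_univ. hcov (Elt p) r}. 1 / ext_lab \<alpha> \<omega> \<pi> r)"

definition btoggle :: "real \<Rightarrow> real \<Rightarrow> 'a::order \<Rightarrow> ('a \<Rightarrow> real) \<Rightarrow> ('a \<Rightarrow> real)" where
  "btoggle \<alpha> \<omega> p \<pi> = \<pi>(p := lower_sum \<alpha> \<omega> \<pi> p / (\<pi> p * upper_inv_sum \<alpha> \<omega> \<pi> p))"

definition linear_extension :: "'a::order list \<Rightarrow> bool" where
  "linear_extension L \<longleftrightarrow> distinct L \<and> set L = UNIV \<and>
     (\<forall>i j. i < j \<and> j < length L \<longrightarrow> \<not> (L ! j < L ! i))"

text \<open>Birational rowmotion: tau_{p1} o ... o tau_{pm} for a linear extension p1..pm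
  (the result is independent of the choice; we pick one).\<close>
definition brow :: "real \<Rightarrow> real \<Rightarrow> ('a::{finite,order} \<Rightarrow> real) \<Rightarrow> ('a \<Rightarrow> real)" where
  "brow \<alpha> \<omega> \<pi> = foldr (btoggle \<alpha> \<omega>) (SOME L. linear_extension L) \<pi>"

definition Tplus :: "real \<Rightarrow> real \<Rightarrow> 'a::order \<Rightarrow> ('a \<Rightarrow> real) \<Rightarrow> real" where
  "Tplus \<alpha> \<omega> p \<pi> = \<pi> p / lower_sum \<alpha> \<omega> \<pi> p"

definition Tminus :: "real \<Rightarrow> real \<Rightarrow> 'a::order \<Rightarrow> ('a \<Rightarrow> real) \<Rightarrow> real" where
  "Tminus \<alpha> \<omega> p \<pi> = 1 / (\<pi> p * upper_inv_sum \<alpha> \<omega> \<pi> p)"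

definition Tstat :: "real \<Rightarrow> real \<Rightarrow> 'a::order \<Rightarrow> ('a \<Rightarrow> real) \<Rightarrow> real" where
  "Tstat \<alpha> \<omega> p \<pi> = Tplus \<alpha> \<omega> p \<pi> / Tminus \<alpha> \<omega> p \<pi>"

end

theory Submission
  imports Defs
begin



lemma hless_simps[simp]:
  "hless Bot x \<longleftrightarrow> x \<noteq> Bot"
  "hless x Bot \<longleftrightarrow> False"
  "hless (Elt a) (Elt b) \<longleftrightarrow> a < b"
  "hless (Elt a) Top"
  "hless Top x \<longleftrightarrow> False"
  "hless x Top \<longleftrightarrow> x \<noteq> Top"
  by (cases x; auto simp: hless_def less_le)+

lemma hcov_irrefl[simp]: "\<not> hcov u u"
  by (simp add: hcov_def hless_def)

lemma hcov_lowerE: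
  assumes "hcov r (Elt p)"
  shows "r = Bot \<or> (\<exists>q. r = Elt q \<and> q < p)"
  using assms by (cases r) (auto simp: hcov_def)

lemma hcov_upperE:
  assumes "hcov (Elt p) r"
  shows "r = Top \<or> (\<exists>q. r = Elt q \<and> p < q)"
  using assms by (cases r) (auto simp: hcov_def)

lemma hat_univ_UNIV: "hat_univ = UNIV"
proof -
  have "x \<in> hat_univ" for x :: "'a hat" by (cases x) (auto simp: hat_univ_def)
  then show ?thesis by auto
qed

lemma finite_hat[simp]: "finite (UNIV :: ('a::finite) hat set)"
proof -
  have "(UNIV :: 'a hat set) \<subseteq> {Bot, Top} \<union> Elt ` UNIV"
    unfolding hat_univ_UNIV[symmetric] hat_univ_def by simp
  moreover have "finite ({Bot, Top} \<union> Elt ` (UNIV::'a set))" by simp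
  ultimately show ?thesis by (rule finite_subset)
qed

instance hat :: (finite) finite
  by standard (rule finite_hat)

lemma lower_cover_ex:
  fixes p :: "'a::{finite,order}"
  shows "\<exists>r. hcov r (Elt p)"
proof (cases "{q. q < p} = {}")
  case True
  have "hcov Bot (Elt p)"
    unfolding hcov_def
  proof (auto)
    fix z assume "z \<noteq> Bot" "hless z (Elt p)"
    then show False using True by (cases z) auto
  qed
  then show ?thesis by blast
next
  case False
  obtain m where m: "m \<in> {q. q < p}" "\<forall>b\<in>{q. q < p}. m \<le> b \<longrightarrow> m = b"
    using finite_has_maximal[of "{q. q < p}"] False by auto
  have "hcov (Elt m) (Elt p)"
    unfolding hcov_def
  proof (auto simp: m(1)[simplified])
    fix z assume "hless (Elt m) z" "hless z (Elt p)"
    then show False using m by (cases z) (auto simp: less_le)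
  qed
  then show ?thesis by blast
qed

lemma upper_cover_ex:
  fixes p :: "'a::{finite,order}"
  shows "\<exists>r. hcov (Elt p) r"
proof (cases "{q. p < q} = {}")
  case True
  have "\<not> (\<exists>z. hless (Elt p) z \<and> hless z Top)"
  proof
    assume "\<exists>z. hless (Elt p) z \<and> hless z Top"
    then obtain z where "hless (Elt p) z" "hless z Top" by blast
    then show False using True by (cases z) auto
  qed
  then have "hcov (Elt p) Top" unfolding hcov_def by simp
  then show ?thesis by blast
next
  case False
  obtain m where m: "m \<in> {q. p < q}" "\<forall>b\<in>{q. p < q}. b \<le> m \<longrightarrow> m = b"
    using finite_has_minimal[of "{q. p < q}"] False by auto
  have "hcov (Elt p) (Elt m)"
    unfolding hcov_def
  proof (auto simp: m(1)[simplified])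
    fix z assume "hless z (Elt m)" "hless (Elt p) z"
    then show False using m by (cases z) (auto simp: less_le)
  qed
  then show ?thesis by blast
qed



lemma ext_pos:
  assumes "\<alpha> > 0" "\<omega> > 0" "\<forall>x. \<pi> x > 0"
  shows "ext_lab \<alpha> \<omega> \<pi> r > 0"
  using assms by (cases r) auto

lemma lower_sum_pos:
  fixes \<pi> :: "'a::{finite,order} \<Rightarrow> real"
  assumes "\<alpha> > 0" "\<omega> > 0" "\<forall>x. \<pi> x > 0"
  shows "lower_sum \<alpha> \<omega> \<pi> p > 0"
  unfolding lower_sum_def
proof (rule sum_pos)
  show "finite {r \<in> hat_univ. hcov r (Elt p)}" by simp
  show "{r \<in> hat_univ. hcov r (Elt p)} \<noteq> {}"
    using lower_cover_ex[of p] by (auto simp: hat_univ_UNIV)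
  fix i show "0 < ext_lab \<alpha> \<omega> \<pi> i"
    using ext_pos[OF assms] by blast
qed

lemma upper_inv_sum_pos:
  fixes \<pi> :: "'a::{finite,order} \<Rightarrow> real"
  assumes "\<alpha> > 0" "\<omega> > 0" "\<forall>x. \<pi> x > 0"
  shows "upper_inv_sum \<alpha> \<omega> \<pi> p > 0"
  unfolding upper_inv_sum_def
proof (rule sum_pos)
  show "finite {r \<in> hat_univ. hcov (Elt p) r}" by simp
  show "{r \<in> hat_univ. hcov (Elt p) r} \<noteq> {}"
    using upper_cover_ex[of p] by (auto simp: hat_univ_UNIV)
  fix i show "0 < 1 / ext_lab \<alpha> \<omega> \<pi> i"
    using ext_pos[OF assms] by simp
qed

lemma btoggle_pos:
  fixes \<pi> :: "'a::{finite,order} \<Rightarrow> real"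
  assumes "\<alpha> > 0" "\<omega> > 0" "\<forall>x. \<pi> x > 0"
  shows "\<forall>x. btoggle \<alpha> \<omega> q \<pi> x > 0"
  using assms lower_sum_pos[OF assms, of q] upper_inv_sum_pos[OF assms, of q]
  by (auto simp: btoggle_def)

lemma foldr_pos:
  fixes \<pi> :: "'a::{finite,order} \<Rightarrow> real"
  assumes "\<alpha> > 0" "\<omega> > 0" "\<forall>x. \<pi> x > 0"
  shows "\<forall>x. foldr (btoggle \<alpha> \<omega>) L \<pi> x > 0"
  by (induction L) (auto simp: assms btoggle_pos)

lemma brow_pos:
  fixes \<pi> :: "'a::{finite,order} \<Rightarrow> real"
  assumes "\<alpha> > 0" "\<omega> > 0" "\<forall>x. \<pi> x > 0"
  shows "\<forall>x. brow \<alpha> \<omega> \<pi> x > 0"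
  unfolding brow_def using foldr_pos[OF assms] by blast

lemma brow_iter_pos:
  fixes \<pi> :: "'a::{finite,order} \<Rightarrow> real"
  assumes "\<alpha> > 0" "\<omega> > 0" "\<forall>x. \<pi> x > 0"
  shows "\<forall>x. (brow \<alpha> \<omega> ^^ n) \<pi> x > 0"
  by (induction n) (auto simp: assms brow_pos)

lemma lower_sum_cong:
  fixes \<pi> \<sigma> :: "'a::{finite,order} \<Rightarrow> real"
  assumes "\<And>q. q < p \<Longrightarrow> \<pi> q = \<sigma> q"
  shows "lower_sum \<alpha> \<omega> \<pi> p = lower_sum \<alpha> \<omega> \<sigma> p"
  unfolding lower_sum_def
proof (rule sum.cong)
  fix r assume "r \<in> {r \<in> hat_univ. hcov r (Elt p)}"
  then have "r = Bot \<or> (\<exists>q. r = Elt q \<and> q < p)" using hcov_lowerE by blast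
  then show "ext_lab \<alpha> \<omega> \<pi> r = ext_lab \<alpha> \<omega> \<sigma> r" using assms by auto
qed simp

lemma upper_sum_cong:
  fixes \<pi> \<sigma> :: "'a::{finite,order} \<Rightarrow> real"
  assumes "\<And>q. p < q \<Longrightarrow> \<pi> q = \<sigma> q"
  shows "upper_inv_sum \<alpha> \<omega> \<pi> p = upper_inv_sum \<alpha> \<omega> \<sigma> p"
  unfolding upper_inv_sum_def
proof (rule sum.cong)
  fix r assume "r \<in> {r \<in> hat_univ. hcov (Elt p) r}"
  then have "r = Top \<or> (\<exists>q. r = Elt q \<and> p < q)" using hcov_upperE by blast
  then show "1 / ext_lab \<alpha> \<omega> \<pi> r = 1 / ext_lab \<alpha> \<omega> \<sigma> r" using assms by auto
qed simp

lemma foldr_outside: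
  "q \<notin> set B \<Longrightarrow> foldr (btoggle \<alpha> \<omega>) B x q = x q"
  by (induction B) (auto simp: btoggle_def)

lemma linext_ex: "\<exists>L::('a::{finite,order}) list. linear_extension L"
proof -
  obtain xs :: "'a list" where xs: "set xs = UNIV" "distinct xs"
    using finite_distinct_list[of "UNIV :: 'a set"] by auto
  define f :: "'a \<Rightarrow> nat" where "f x = card {q. q < x}" for x
  have fmono: "a < b \<Longrightarrow> f a < f b" for a b
  proof -
    assume ab: "a < b"
    have "{q. q < a} \<subset> {q. q < b}" using ab by (auto intro: less_trans)
    then show "f a < f b" unfolding f_def by (rule psubset_card_mono[rotated]) simp
  qed
  define L where "L = sort_key f xs"
  have s: "sorted (map f L)" unfolding L_def by simp
  have "distinct L" "set L = UNIV" using xs unfolding L_def by auto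
  moreover have "\<not> (L ! j < L ! i)" if "i < j" "j < length L" for i j
  proof
    assume "L ! j < L ! i"
    then have "f (L ! j) < f (L ! i)" by (rule fmono)
    moreover have "f (L ! i) \<le> f (L ! j)"
      using s that sorted_nth_mono[of "map f L" i j] by auto
    ultimately show False by simp
  qed
  ultimately show ?thesis unfolding linear_extension_def by blast
qed

lemma linext_split:
  fixes L :: "('a::{finite,order}) list"
  assumes "linear_extension L"
  obtains A B where "L = A @ p # B" "p \<notin> set A" "p \<notin> set B"
     "\<And>q. q < p \<Longrightarrow> q \<notin> set B" "\<And>q. p < q \<Longrightarrow> q \<notin> set A"
proof -
  have d: "distinct L" and u: "set L = UNIV"
   and le: "\<And>i j. i < j \<Longrightarrow> j < length L \<Longrightarrow> \<not> (L ! j < L ! i)"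
    using assms unfolding linear_extension_def by auto
  obtain A B where L: "L = A @ p # B" using split_list[of p L] u by auto
  have pA: "p \<notin> set A" and pB: "p \<notin> set B" using d L by auto
  have 1: "q \<notin> set B" if "q < p" for q
  proof
    assume "q \<in> set B"
    then obtain k where k: "k < length B" "B ! k = q" by (auto simp: in_set_conv_nth)
    have "L ! (length A + Suc k) = q" using k L by (simp add: nth_append)
    moreover have "L ! (length A) = p" using L by simp
    moreover have "length A + Suc k < length L" using k L by simp
    ultimately show False using le[of "length A" "length A + Suc k"] that by auto
  qed
  have 2: "q \<notin> set A" if "p < q" for q
  proof
    assume "q \<in> set A"
    then obtain k where k: "k < length A" "A ! k = q" by (auto simp: in_set_conv_nth)
    have "L ! k = q" using k L by (simp add: nth_append)
    moreover have "L ! (length A) = p" using L by simp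
    moreover have "length A < length L" using L by simp
    ultimately show False using le[of k "length A"] that k by auto
  qed
  show ?thesis using that L pA pB 1 2 by blast
qed

lemma key_identity:
  fixes \<pi> :: "'a::{finite,order} \<Rightarrow> real"
  assumes pos: "\<alpha> > 0" "\<omega> > 0" "\<forall>x. \<pi> x > 0"
  shows "Tplus \<alpha> \<omega> p \<pi> = Tminus \<alpha> \<omega> p (brow \<alpha> \<omega> \<pi>)"
proof -
  define L where "L = (SOME L::'a list. linear_extension L)"
  have le: "linear_extension L" unfolding L_def using linext_ex someI_ex by metis
  obtain A B where AB: "L = A @ p # B" "p \<notin> set A" "p \<notin> set B"
     "\<And>q. q < p \<Longrightarrow> q \<notin> set B" "\<And>q. p < q \<Longrightarrow> q \<notin> set A"
    using linext_split[OF le] by blast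
  define z where "z = foldr (btoggle \<alpha> \<omega>) B \<pi>"
  define w where "w = btoggle \<alpha> \<omega> p z"
  define y where "y = foldr (btoggle \<alpha> \<omega>) A w"
  have y: "brow \<alpha> \<omega> \<pi> = y" unfolding brow_def y_def w_def z_def L_def[symmetric] AB(1) by simp
  have ypos: "\<forall>x. y x > 0" using brow_pos[OF pos] y by metis
  have zp: "z p = \<pi> p" unfolding z_def using foldr_outside AB(3) by metis
  have Lz: "lower_sum \<alpha> \<omega> z p = lower_sum \<alpha> \<omega> \<pi> p"
    by (rule lower_sum_cong) (simp add: z_def foldr_outside AB(4))
  have Uz: "upper_inv_sum \<alpha> \<omega> z p = upper_inv_sum \<alpha> \<omega> y p"
  proof (rule upper_sum_cong)
    fix q assume q: "p < q"
    have "y q = w q" unfolding y_def using foldr_outside AB(5)[OF q] by metis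
    also have "w q = z q" unfolding w_def btoggle_def using q by auto
    finally show "z q = y q" by simp
  qed
  have yp: "y p = w p" unfolding y_def using foldr_outside AB(2) by metis
  have wp: "w p = lower_sum \<alpha> \<omega> \<pi> p / (\<pi> p * upper_inv_sum \<alpha> \<omega> y p)"
    unfolding w_def btoggle_def using zp Lz Uz by simp
  have U: "upper_inv_sum \<alpha> \<omega> y p > 0" using upper_inv_sum_pos[OF pos(1,2) ypos] by blast
  have Lp: "lower_sum \<alpha> \<omega> \<pi> p > 0" using lower_sum_pos[OF pos] by blast
  show ?thesis unfolding y Tplus_def Tminus_def yp wp
    using U Lp pos(3) by (simp add: field_simps)
qed



definition gq :: "real \<Rightarrow> real \<Rightarrow> ('a::order \<Rightarrow> real) \<Rightarrow> 'a hat \<Rightarrow> 'a hat \<Rightarrow> real" where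
  "gq \<alpha> \<omega> \<pi> u v = (if hcov u v then ext_lab \<alpha> \<omega> \<pi> u / ext_lab \<alpha> \<omega> \<pi> v else 0)"

definition Qf :: "real \<Rightarrow> real \<Rightarrow> ('a::{finite,order} \<Rightarrow> real) \<Rightarrow> real" where
  "Qf \<alpha> \<omega> \<pi> = (\<Sum>v\<in>UNIV. \<Sum>u\<in>UNIV. gq \<alpha> \<omega> \<pi> u v)"

definition Rq :: "real \<Rightarrow> real \<Rightarrow> ('a::{finite,order} \<Rightarrow> real) \<Rightarrow> 'a \<Rightarrow> real" where
  "Rq \<alpha> \<omega> \<pi> p = (\<Sum>v\<in>UNIV-{Elt p}. \<Sum>u\<in>UNIV-{Elt p}. gq \<alpha> \<omega> \<pi> u v)"

lemma lower_as_sum: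
  fixes \<pi> :: "'a::{finite,order} \<Rightarrow> real"
  shows "(\<Sum>u\<in>UNIV. gq \<alpha> \<omega> \<pi> u (Elt p)) = lower_sum \<alpha> \<omega> \<pi> p / \<pi> p"
proof -
  have "(\<Sum>u\<in>UNIV. gq \<alpha> \<omega> \<pi> u (Elt p))
      = (\<Sum>u\<in>UNIV. if hcov u (Elt p) then ext_lab \<alpha> \<omega> \<pi> u / \<pi> p else 0)"
    unfolding gq_def ext_lab.simps by (rule refl)
  also have "\<dots> = (\<Sum>u\<in>{u\<in>UNIV. hcov u (Elt p)}. ext_lab \<alpha> \<omega> \<pi> u / \<pi> p)"
    by (rule sum.inter_filter[symmetric]) simp
  also have "\<dots> = lower_sum \<alpha> \<omega> \<pi> p / \<pi> p"
    unfolding lower_sum_def hat_univ_UNIV by (simp add: sum_divide_distrib)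
  finally show ?thesis .
qed

lemma upper_as_sum:
  fixes \<pi> :: "'a::{finite,order} \<Rightarrow> real"
  shows "(\<Sum>v\<in>UNIV. gq \<alpha> \<omega> \<pi> (Elt p) v) = \<pi> p * upper_inv_sum \<alpha> \<omega> \<pi> p"
proof -
  have "(\<Sum>v\<in>UNIV. gq \<alpha> \<omega> \<pi> (Elt p) v)
      = (\<Sum>v\<in>UNIV. if hcov (Elt p) v then \<pi> p / ext_lab \<alpha> \<omega> \<pi> v else 0)"
    unfolding gq_def ext_lab.simps by (rule refl)
  also have "\<dots> = (\<Sum>v\<in>{v\<in>UNIV. hcov (Elt p) v}. \<pi> p / ext_lab \<alpha> \<omega> \<pi> v)"
    by (rule sum.inter_filter[symmetric]) simp
  also have "\<dots> = \<pi> p * upper_inv_sum \<alpha> \<omega> \<pi> p"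
    unfolding upper_inv_sum_def hat_univ_UNIV by (simp add: sum_distrib_left)
  finally show ?thesis .
qed

lemma Q_split:
  fixes \<pi> :: "'a::{finite,order} \<Rightarrow> real"
  shows "Qf \<alpha> \<omega> \<pi> = lower_sum \<alpha> \<omega> \<pi> p / \<pi> p + \<pi> p * upper_inv_sum \<alpha> \<omega> \<pi> p + Rq \<alpha> \<omega> \<pi> p"
proof -
  let ?g = "gq \<alpha> \<omega> \<pi>"
  have in1: "(\<Sum>u\<in>UNIV. ?g u v) = ?g (Elt p) v + (\<Sum>u\<in>UNIV-{Elt p}. ?g u v)" for v
    by (rule sum.remove) auto
  have "Qf \<alpha> \<omega> \<pi> = (\<Sum>u\<in>UNIV. ?g u (Elt p)) + (\<Sum>v\<in>UNIV-{Elt p}. \<Sum>u\<in>UNIV. ?g u v)"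
    unfolding Qf_def by (rule sum.remove) auto
  also have "(\<Sum>v\<in>UNIV-{Elt p}. \<Sum>u\<in>UNIV. ?g u v)
     = (\<Sum>v\<in>UNIV-{Elt p}. ?g (Elt p) v) + Rq \<alpha> \<omega> \<pi> p"
    unfolding in1 Rq_def by (simp add: sum.distrib)
  also have "(\<Sum>v\<in>UNIV-{Elt p}. ?g (Elt p) v) = (\<Sum>v\<in>UNIV. ?g (Elt p) v)"
  proof -
    have "(\<Sum>v\<in>UNIV. ?g (Elt p) v) = ?g (Elt p) (Elt p) + (\<Sum>v\<in>UNIV-{Elt p}. ?g (Elt p) v)"
      by (rule sum.remove) auto
    then show ?thesis by (simp add: gq_def)
  qed
  finally show ?thesis using lower_as_sum[of \<alpha> \<omega> \<pi> p] upper_as_sum[of \<alpha> \<omega> \<pi> p] by simp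
qed

lemma ext_toggle_other:
  "u \<noteq> Elt q \<Longrightarrow> ext_lab \<alpha> \<omega> (btoggle \<alpha> \<omega> q \<pi>) u = ext_lab \<alpha> \<omega> \<pi> u"
  by (cases u) (auto simp: btoggle_def)

lemma Q_toggle:
  fixes \<pi> :: "'a::{finite,order} \<Rightarrow> real"
  assumes pos: "\<alpha> > 0" "\<omega> > 0" "\<forall>x. \<pi> x > 0"
  shows "Qf \<alpha> \<omega> (btoggle \<alpha> \<omega> q \<pi>) = Qf \<alpha> \<omega> \<pi>"
proof -
  let ?t = "btoggle \<alpha> \<omega> q \<pi>"
  have R: "Rq \<alpha> \<omega> ?t q = Rq \<alpha> \<omega> \<pi> q"
    unfolding Rq_def gq_def by (rule sum.cong, simp, rule sum.cong, simp, simp add: ext_toggle_other)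
  have L: "lower_sum \<alpha> \<omega> ?t q = lower_sum \<alpha> \<omega> \<pi> q"
    by (rule lower_sum_cong) (auto simp: btoggle_def)
  have U: "upper_inv_sum \<alpha> \<omega> ?t q = upper_inv_sum \<alpha> \<omega> \<pi> q"
    by (rule upper_sum_cong) (auto simp: btoggle_def)
  have tq: "?t q = lower_sum \<alpha> \<omega> \<pi> q / (\<pi> q * upper_inv_sum \<alpha> \<omega> \<pi> q)"
    by (simp add: btoggle_def)
  have l0: "lower_sum \<alpha> \<omega> \<pi> q > 0" using lower_sum_pos[OF pos] by blast
  have u0: "upper_inv_sum \<alpha> \<omega> \<pi> q > 0" using upper_inv_sum_pos[OF pos] by blast
  have x0: "\<pi> q > 0" using pos by blast
  show ?thesis
    unfolding Q_split[of _ _ ?t q] Q_split[of _ _ \<pi> q] R L U tq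
    using l0 u0 x0 by (simp add: field_simps)
qed

lemma Q_foldr:
  fixes \<pi> :: "'a::{finite,order} \<Rightarrow> real"
  assumes pos: "\<alpha> > 0" "\<omega> > 0" "\<forall>x. \<pi> x > 0"
  shows "Qf \<alpha> \<omega> (foldr (btoggle \<alpha> \<omega>) B \<pi>) = Qf \<alpha> \<omega> \<pi>"
proof (induction B)
  case (Cons a B)
  then show ?case using Q_toggle[OF pos(1,2) foldr_pos[OF pos, of B]] by simp
qed simp

lemma Q_brow:
  fixes \<pi> :: "'a::{finite,order} \<Rightarrow> real"
  assumes pos: "\<alpha> > 0" "\<omega> > 0" "\<forall>x. \<pi> x > 0"
  shows "Qf \<alpha> \<omega> (brow \<alpha> \<omega> \<pi>) = Qf \<alpha> \<omega> \<pi>"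
  unfolding brow_def by (rule Q_foldr[OF pos])

lemma Q_iter:
  fixes \<pi> :: "'a::{finite,order} \<Rightarrow> real"
  assumes pos: "\<alpha> > 0" "\<omega> > 0" "\<forall>x. \<pi> x > 0"
  shows "Qf \<alpha> \<omega> ((brow \<alpha> \<omega> ^^ n) \<pi>) = Qf \<alpha> \<omega> \<pi>"
proof (induction n)
  case (Suc n)
  have "Qf \<alpha> \<omega> (brow \<alpha> \<omega> ((brow \<alpha> \<omega> ^^ n) \<pi>)) = Qf \<alpha> \<omega> ((brow \<alpha> \<omega> ^^ n) \<pi>)"
    by (rule Q_brow[OF pos(1,2) brow_iter_pos[OF pos]])
  then show ?case using Suc by simp
qed simp

lemma gq_nonneg:
  assumes pos: "\<alpha> > 0" "\<omega> > 0" "\<forall>x. \<pi> x > 0"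
  shows "gq \<alpha> \<omega> \<pi> u v \<ge> 0"
  using ext_pos[OF pos, of u] ext_pos[OF pos, of v] by (simp add: gq_def)

lemma ratio_le_Q:
  fixes \<pi> :: "'a::{finite,order} \<Rightarrow> real"
  assumes pos: "\<alpha> > 0" "\<omega> > 0" "\<forall>x. \<pi> x > 0" and c: "hcov u v"
  shows "ext_lab \<alpha> \<omega> \<pi> u / ext_lab \<alpha> \<omega> \<pi> v \<le> Qf \<alpha> \<omega> \<pi>"
proof -
  have "ext_lab \<alpha> \<omega> \<pi> u / ext_lab \<alpha> \<omega> \<pi> v = gq \<alpha> \<omega> \<pi> u v" using c by (simp add: gq_def)
  also have "\<dots> \<le> (\<Sum>u\<in>UNIV. gq \<alpha> \<omega> \<pi> u v)"
    by (rule member_le_sum) (auto simp: gq_nonneg[OF pos])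
  also have "\<dots> \<le> Qf \<alpha> \<omega> \<pi>" unfolding Qf_def
    by (rule member_le_sum[where f = "\<lambda>v. \<Sum>u\<in>UNIV. gq \<alpha> \<omega> \<pi> u v"])
       (auto intro!: sum_nonneg simp: gq_nonneg[OF pos])
  finally show ?thesis .
qed

lemma Sminus_le_Q:
  fixes \<pi> :: "'a::{finite,order} \<Rightarrow> real"
  assumes pos: "\<alpha> > 0" "\<omega> > 0" "\<forall>x. \<pi> x > 0"
  shows "\<pi> p * upper_inv_sum \<alpha> \<omega> \<pi> p \<le> Qf \<alpha> \<omega> \<pi>"
  unfolding upper_as_sum[symmetric] Qf_def
  by (rule sum_mono, rule member_le_sum) (auto simp: gq_nonneg[OF pos])



lemma lower_bound_val:
  fixes \<pi> :: "'a::{finite,order} \<Rightarrow> real"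
  assumes pos: "\<alpha> > 0" "\<omega> > 0" "\<forall>x. \<pi> x > 0" and K: "Qf \<alpha> \<omega> \<pi> \<le> K" "1 \<le> K"
  shows "\<alpha> \<le> K ^ (card {q. q < x} + 1) * \<pi> x"
proof (induction "card {q. q < x}" arbitrary: x rule: less_induct)
  case less
  obtain r where r: "hcov r (Elt x)" using lower_cover_ex by blast
  have rat: "ext_lab \<alpha> \<omega> \<pi> r / \<pi> x \<le> K"
    using ratio_le_Q[OF pos r] K by simp
  have px: "\<pi> x > 0" using pos by blast
  have Kge: "K \<le> K ^ (card {q. q < x} + 1)"
    using K(2) by (metis le_add2 power_increasing power_one_right)
  from hcov_lowerE[OF r] show ?case
  proof
    assume "r = Bot"
    then have "\<alpha> \<le> K * \<pi> x" using rat px by (simp add: divide_le_eq)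
    also have "\<dots> \<le> K ^ (card {q. q < x} + 1) * \<pi> x" using Kge px by (intro mult_right_mono) auto
    finally show ?thesis .
  next
    assume "\<exists>q. r = Elt q \<and> q < x"
    then obtain q where q: "r = Elt q" "q < x" by blast
    have sub: "{q'. q' < q} \<subset> {q'. q' < x}" using q(2) by (auto intro: less_trans)
    have lt: "card {q'. q' < q} < card {q'. q' < x}"
      by (rule psubset_card_mono[OF _ sub]) simp
    have ih: "\<alpha> \<le> K ^ (card {q'. q' < q} + 1) * \<pi> q" using less lt by blast
    have "\<pi> q \<le> K * \<pi> x" using rat px q by (simp add: divide_le_eq)
    then have "K ^ (card {q'. q' < q} + 1) * \<pi> q \<le> K ^ (card {q'. q' < q} + 1) * (K * \<pi> x)"
      using K(2) by (intro mult_left_mono) auto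
    also have "\<dots> = K ^ (card {q'. q' < q} + 2) * \<pi> x" by simp
    also have "\<dots> \<le> K ^ (card {q. q < x} + 1) * \<pi> x"
      using px K(2) lt by (intro mult_right_mono power_increasing) auto
    finally show ?thesis using ih by simp
  qed
qed

lemma upper_bound_val:
  fixes \<pi> :: "'a::{finite,order} \<Rightarrow> real"
  assumes pos: "\<alpha> > 0" "\<omega> > 0" "\<forall>x. \<pi> x > 0" and K: "Qf \<alpha> \<omega> \<pi> \<le> K" "1 \<le> K"
  shows "\<pi> x \<le> K ^ (card {q. x < q} + 1) * \<omega>"
proof (induction "card {q. x < q}" arbitrary: x rule: less_induct)
  case less
  obtain r where r: "hcov (Elt x) r" using upper_cover_ex by blast
  have rat: "\<pi> x / ext_lab \<alpha> \<omega> \<pi> r \<le> K"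
    using ratio_le_Q[OF pos r] K by simp
  have er: "ext_lab \<alpha> \<omega> \<pi> r > 0" using ext_pos[OF pos] by blast
  have Kge: "K \<le> K ^ (card {q. x < q} + 1)"
    using K(2) by (metis le_add2 power_increasing power_one_right)
  from hcov_upperE[OF r] show ?case
  proof
    assume rT: "r = Top"
    then have "\<pi> x \<le> K * \<omega>" using rat pos(2) by (simp add: divide_le_eq)
    also have "\<dots> \<le> K ^ (card {q. x < q} + 1) * \<omega>" using Kge pos(2) by (intro mult_right_mono) auto
    finally show ?thesis .
  next
    assume "\<exists>q. r = Elt q \<and> x < q"
    then obtain q where q: "r = Elt q" "x < q" by blast
    have sub: "{q'. q < q'} \<subset> {q'. x < q'}" using q(2) by (auto intro: less_trans)
    have lt: "card {q'. q < q'} < card {q'. x < q'}"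
      by (rule psubset_card_mono[OF _ sub]) simp
    have ih: "\<pi> q \<le> K ^ (card {q'. q < q'} + 1) * \<omega>" using less lt by blast
    have "\<pi> x \<le> K * \<pi> q" using rat er q by (simp add: divide_le_eq)
    also have "\<dots> \<le> K * (K ^ (card {q'. q < q'} + 1) * \<omega>)"
      using K(2) ih by (intro mult_left_mono) auto
    also have "\<dots> = K ^ (card {q'. q < q'} + 2) * \<omega>" by simp
    also have "\<dots> \<le> K ^ (card {q. x < q} + 1) * \<omega>"
      using pos(2) K(2) lt by (intro mult_right_mono power_increasing) auto
    finally show ?thesis .
  qed
qed

lemma Sminus_lower:
  fixes \<pi> :: "'a::{finite,order} \<Rightarrow> real"
  assumes pos: "\<alpha> > 0" "\<omega> > 0" "\<forall>x. \<pi> x > 0" and K: "Qf \<alpha> \<omega> \<pi> \<le> K" "1 \<le> K"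
  shows "\<alpha> / (K ^ (card (UNIV :: 'a set) + 1) * (K ^ (card (UNIV :: 'a set) + 1) * \<omega>)) \<le> \<pi> p * upper_inv_sum \<alpha> \<omega> \<pi> p"
proof -
  let ?M = "K ^ (card (UNIV :: 'a set) + 1)"
  have M1: "1 \<le> ?M" using K(2) by (rule one_le_power)
  have cardle: "card A \<le> card (UNIV :: 'a set)" for A :: "'a set" by (rule card_mono) auto
  have pl: "\<alpha> \<le> ?M * \<pi> p"
  proof -
    have "\<alpha> \<le> K ^ (card {q. q < p} + 1) * \<pi> p" by (rule lower_bound_val[OF pos K])
    also have "\<dots> \<le> ?M * \<pi> p" using pos(3) K(2) cardle[of "{q. q < p}"]
      by (intro mult_right_mono power_increasing) (auto simp: less_imp_le)
    finally show ?thesis .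
  qed
  obtain s where s: "hcov (Elt p) s" using upper_cover_ex by blast
  have es: "ext_lab \<alpha> \<omega> \<pi> s > 0" using ext_pos[OF pos] by blast
  have su: "ext_lab \<alpha> \<omega> \<pi> s \<le> ?M * \<omega>"
  proof (cases s)
    case Bot then show ?thesis using s by (simp add: hcov_def)
  next
    case Top then show ?thesis using M1 pos(2) by simp
  next
    case (Elt q)
    have "\<pi> q \<le> K ^ (card {q'. q < q'} + 1) * \<omega>" by (rule upper_bound_val[OF pos K])
    also have "\<dots> \<le> ?M * \<omega>" using pos(2) K(2) cardle[of "{q'. q < q'}"]
      by (intro mult_right_mono power_increasing) auto
    finally show ?thesis using Elt by simp
  qed
  have "1 / ext_lab \<alpha> \<omega> \<pi> s \<le> upper_inv_sum \<alpha> \<omega> \<pi> p"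
    unfolding upper_inv_sum_def
    by (rule member_le_sum) (auto simp: s hat_univ_UNIV less_imp_le ext_pos[OF pos])
  then have "\<pi> p / ext_lab \<alpha> \<omega> \<pi> s \<le> \<pi> p * upper_inv_sum \<alpha> \<omega> \<pi> p"
    using pos(3) by (metis less_imp_le mult_left_mono times_divide_eq_right mult_1_right)
  moreover have "\<alpha> / (?M * (?M * \<omega>)) \<le> \<pi> p / ext_lab \<alpha> \<omega> \<pi> s"
  proof -
    have "\<alpha> / (?M * (?M * \<omega>)) = (\<alpha> / ?M) / (?M * \<omega>)" by simp
    also have "\<dots> \<le> \<pi> p / (?M * \<omega>)"
      using pl M1 pos by (intro divide_right_mono) (auto simp: divide_le_eq mult.commute)
    also have "\<dots> \<le> \<pi> p / ext_lab \<alpha> \<omega> \<pi> s"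
      using su es pos(3) by (intro divide_left_mono) (auto simp: less_imp_le)
    finally show ?thesis .
  qed
  ultimately show ?thesis by linarith
qed



theorem lemma6p4:
  fixes \<alpha> \<omega> :: real and \<pi> :: "'a::{finite,order} \<Rightarrow> real" and p :: 'a
  assumes "\<alpha> > 0" and "\<omega> > 0" and "\<forall>x. \<pi> x > 0"
  shows "(\<lambda>n. (\<Prod>i<n. Tstat \<alpha> \<omega> p ((brow \<alpha> \<omega> ^^ i) \<pi>)) powr (1 / real n))
           \<longlonglongrightarrow> 1"
proof -
  note pos = assms
  define \<pi>s where "\<pi>s n = (brow \<alpha> \<omega> ^^ n) \<pi>" for n
  define a where "a n = Tminus \<alpha> \<omega> p (\<pi>s n)" for n
  define K where "K = max (Qf \<alpha> \<omega> \<pi>) 1"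
  define c where "c = \<alpha> / (K ^ (card (UNIV :: 'a set) + 1) * (K ^ (card (UNIV :: 'a set) + 1) * \<omega>))"
  have K1: "1 \<le> K" unfolding K_def by simp
  have c0: "c > 0" unfolding c_def using K1 pos by (intro divide_pos_pos mult_pos_pos) auto
  have posn: "\<forall>x. \<pi>s n x > 0" for n unfolding \<pi>s_def by (rule brow_iter_pos[OF pos])
  have Qn: "Qf \<alpha> \<omega> (\<pi>s n) \<le> K" for n unfolding \<pi>s_def K_def using Q_iter[OF pos] by simp
  have Sbounds: "c \<le> \<pi>s n p * upper_inv_sum \<alpha> \<omega> (\<pi>s n) p \<and> \<pi>s n p * upper_inv_sum \<alpha> \<omega> (\<pi>s n) p \<le> K" for n
    using Sminus_lower[OF pos(1,2) posn[of n] Qn[of n] K1, of p] Sminus_le_Q[OF pos(1,2) posn[of n], of p] Qn[of n]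
    unfolding c_def by linarith
  have abounds: "1 / K \<le> a n \<and> a n \<le> 1 / c" for n
    using Sbounds[of n] c0 unfolding a_def Tminus_def
    by (auto intro: divide_left_mono)
  have apos: "a n > 0" for n using abounds[of n] K1
    by (metis less_le_trans zero_less_divide_1_iff zero_less_one)
  have step: "Tstat \<alpha> \<omega> p (\<pi>s i) = a (Suc i) / a i" for i
  proof -
    have "Tplus \<alpha> \<omega> p (\<pi>s i) = Tminus \<alpha> \<omega> p (brow \<alpha> \<omega> (\<pi>s i))"
      by (rule key_identity[OF pos(1,2) posn])
    also have "brow \<alpha> \<omega> (\<pi>s i) = \<pi>s (Suc i)" unfolding \<pi>s_def by simp
    finally show ?thesis unfolding Tstat_def a_def by simp
  qed
  have prod: "(\<Prod>i<n. Tstat \<alpha> \<omega> p (\<pi>s i)) = a n / a 0" for n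
  proof (induction n)
    case 0 then show ?case using apos[of 0] by simp
  next
    case (Suc n)
    then show ?case using apos[of n] by (simp add: step)
  qed
  define l where "l = (1 / K) / a 0"
  define h where "h = (1 / c) / a 0"
  have l0: "l > 0" unfolding l_def using K1 apos[of 0] by simp
  have h0: "h > 0" unfolding h_def using c0 apos[of 0] by simp
  have lb: "l \<le> a n / a 0" for n unfolding l_def
    using abounds[of n] apos[of 0] by (intro divide_right_mono) auto
  have ub: "a n / a 0 \<le> h" for n unfolding h_def
    using abounds[of n] apos[of 0] by (intro divide_right_mono) auto
  have lim: "(\<lambda>n. b powr (1 / real n)) \<longlonglongrightarrow> 1" if "b > 0" for b :: real
  proof -
    have "(\<lambda>n. b powr (1 / real n)) \<longlonglongrightarrow> b powr 0"
      using that by (intro tendsto_powr) (auto simp: lim_1_over_n)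
    then show ?thesis using that by simp
  qed
  have "(\<lambda>n. (a n / a 0) powr (1 / real n)) \<longlonglongrightarrow> 1"
  proof (rule tendsto_sandwich[OF _ _ lim[OF l0] lim[OF h0]])
    show "\<forall>\<^sub>F n in sequentially. l powr (1 / real n) \<le> (a n / a 0) powr (1 / real n)"
      using lb l0 by (intro always_eventually allI powr_mono2) (auto simp: less_imp_le)
    show "\<forall>\<^sub>F n in sequentially. (a n / a 0) powr (1 / real n) \<le> h powr (1 / real n)"
      using ub apos by (intro always_eventually allI powr_mono2) (auto simp: less_imp_le)
  qed
  then show ?thesis using prod unfolding \<pi>s_def by simp
qed


end
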